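(* Let $F$ be a field with $\mathrm{char}\,F\ne2$ and let $A$ be an involutive $F$-algebra with norm $n(a)=a\bar a$. (1) If $A$ is reversible, then $A$ is von-Neumann finite. (2) If $A$ is von-Neumann finite and $n$ is anisotropic, then $A$ is reversible.
   Context: Algebras are unital, with bilinear not necessarily associative multiplication. $A$ is involutive if there is an anti-automorphism $a\mapsto\bar a$ with $\bar{\bar a}=a$, $a+\bar a\in F1$ and $a\bar a\in F1$ for all $a$; the norm $n(a)=a\bar a\in F$ is a quadratic form, anisotropic if $n(a)\ne0$ for all $a\ne0$. von-Neumann finite: $ab=1\Rightarrow ba=1$; reversible: $ab=0\Rightarrow ba=0$. *)

theory Defs
  imports Complex_Main
begin

definition unital_algebra ::
  "('f::field \<Rightarrow> 'a::ab_group_add \<Rightarrow> 'a) \<Rightarrow> ('a \<Rightarrow> 'a \<Rightarrow> 'a) \<Rightarrow> 'a \<Rightarrow> bool" where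
  "unital_algebra sc mul e \<longleftrightarrow>
     vector_space sc \<and>
     (\<forall>x y z. mul (x + y) z = mul x z + mul y z) \<and>
     (\<forall>x y z. mul x (y + z) = mul x y + mul x z) \<and>
     (\<forall>c x y. mul (sc c x) y = sc c (mul x y)) \<and>
     (\<forall>c x y. mul x (sc c y) = sc c (mul x y)) \<and>
     (\<forall>x. mul e x = x \<and> mul x e = x)"

definition involutive_algebra ::
  "('f::field \<Rightarrow> 'a::ab_group_add \<Rightarrow> 'a) \<Rightarrow> ('a \<Rightarrow> 'a \<Rightarrow> 'a) \<Rightarrow> 'a \<Rightarrow> ('a \<Rightarrow> 'a) \<Rightarrow> bool" where
  "involutive_algebra sc mul e cj \<longleftrightarrow>
     unital_algebra sc mul e \<and>
     bij cj \<and>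
     (\<forall>x y. cj (x + y) = cj x + cj y) \<and>
     (\<forall>c x. cj (sc c x) = sc c (cj x)) \<and>
     (\<forall>x y. cj (mul x y) = mul (cj y) (cj x)) \<and>
     (\<forall>x. cj (cj x) = x) \<and>
     (\<forall>a. \<exists>c. a + cj a = sc c e) \<and>
     (\<forall>a. \<exists>c. mul a (cj a) = sc c e)"

definition alg_norm ::
  "('f::field \<Rightarrow> 'a::ab_group_add \<Rightarrow> 'a) \<Rightarrow> ('a \<Rightarrow> 'a \<Rightarrow> 'a) \<Rightarrow> 'a \<Rightarrow> ('a \<Rightarrow> 'a) \<Rightarrow> 'a \<Rightarrow> 'f" where
  "alg_norm sc mul e cj a = (THE c. mul a (cj a) = sc c e)"

definition norm_anisotropic ::
  "('f::field \<Rightarrow> 'a::ab_group_add \<Rightarrow> 'a) \<Rightarrow> ('a \<Rightarrow> 'a \<Rightarrow> 'a) \<Rightarrow> 'a \<Rightarrow> ('a \<Rightarrow> 'a) \<Rightarrow> bool" where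
  "norm_anisotropic sc mul e cj \<longleftrightarrow> (\<forall>a. a \<noteq> 0 \<longrightarrow> alg_norm sc mul e cj a \<noteq> 0)"

definition vN_finite :: "('a \<Rightarrow> 'a \<Rightarrow> 'a) \<Rightarrow> 'a \<Rightarrow> bool" where
  "vN_finite mul e \<longleftrightarrow> (\<forall>a b. mul a b = e \<longrightarrow> mul b a = e)"

definition reversible :: "('a::zero \<Rightarrow> 'a \<Rightarrow> 'a) \<Rightarrow> bool" where
  "reversible mul \<longleftrightarrow> (\<forall>a b. mul a b = 0 \<longrightarrow> mul b a = 0)"

end

theory Submission
  imports Defs
begin

locale invalg =
  fixes sc :: "'f::field \<Rightarrow> 'a::ab_group_add \<Rightarrow> 'a"
    and mul :: "'a \<Rightarrow> 'a \<Rightarrow> 'a" and e :: 'a and cj :: "'a \<Rightarrow> 'a"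
  assumes alg: "involutive_algebra sc mul e cj"
begin

sublocale vs: vector_space sc
  using alg unfolding involutive_algebra_def unital_algebra_def by blast

lemma addL: "mul (x + y) z = mul x z + mul y z"
  and addR: "mul x (y + z) = mul x y + mul x z"
  and scL: "mul (sc c x) y = sc c (mul x y)"
  and scR: "mul x (sc c y) = sc c (mul x y)"
  and eL: "mul e x = x" and eR: "mul x e = x"
  and cjadd: "cj (x + y) = cj x + cj y"
  and cjsc: "cj (sc c x) = sc c (cj x)"
  and cjmul: "cj (mul x y) = mul (cj y) (cj x)"
  and cjcj: "cj (cj x) = x"
  and trex: "\<exists>c. x + cj x = sc c e"
  and nmex: "\<exists>c. mul x (cj x) = sc c e"
  using alg unfolding involutive_algebra_def unital_algebra_def by fastforce+

lemma zeroL[simp]: "mul 0 z = 0"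
  using addL[of 0 0 z] by simp
lemma zeroR[simp]: "mul z 0 = 0"
  using addR[of z 0 0] by simp
lemma minusL: "mul (- x) z = - mul x z"
  using addL[of "-x" x z] by (simp add: eq_neg_iff_add_eq_0)
lemma minusR: "mul z (- x) = - mul z x"
  using addR[of z "-x" x] by (simp add: eq_neg_iff_add_eq_0)
lemma diffL: "mul (x - y) z = mul x z - mul y z"
  using addL[of x "-y" z] minusL by simp
lemma diffR: "mul z (x - y) = mul z x - mul z y"
  using addR[of z x "-y"] minusR by simp
lemma cj0: "cj 0 = 0"
  using cjadd[of 0 0] by simp
lemma cjminus: "cj (- x) = - cj x"
  using cjadd[of "-x" x] cj0 by (simp add: eq_neg_iff_add_eq_0)
lemma cjdiff: "cj (x - y) = cj x - cj y"
  using cjadd[of x "-y"] cjminus by simp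

lemma cje: "cj e = e"
proof -
  have "\<And>x. cj x = mul (cj x) (cj e)" using cjmul[of e] eL by metis
  hence "cj (cj e) = mul (cj (cj e)) (cj e)" by blast
  hence "e = mul e (cj e)" by (simp add: cjcj)
  thus ?thesis by (simp add: eL)
qed

definition "tr x = (SOME c. x + cj x = sc c e)"
definition "nm x = (SOME c. mul x (cj x) = sc c e)"

lemma tr: "x + cj x = sc (tr x) e"
  unfolding tr_def using someI_ex[OF trex] .
lemma nm: "mul x (cj x) = sc (nm x) e"
  unfolding nm_def using someI_ex[OF nmex] .
lemma cjx: "cj x = sc (tr x) e - x"
  using tr[of x] by (simp add: algebra_simps)

lemma nm2: "mul (cj x) x = sc (nm x) e"
proof -
  have "mul (cj x) x = sc (tr x) x - mul x x"
    by (subst cjx) (simp add: diffL scL eL)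
  also have "\<dots> = mul x (cj x)"
    unfolding cjx[of x] by (simp add: diffR scR eR)
  finally show ?thesis using nm by simp
qed

lemma trsym: "mul x y + cj (mul x y) = mul y x + cj (mul y x)"
proof -
  have exp: "\<And>p q x y. mul (sc p e - y) (sc q e - x)
      = sc p (sc q e) - sc p x - sc q y + mul y x"
    by (simp add: diffL diffR scL scR eL eR vs.scale_right_diff_distrib algebra_simps)
  have e1: "cj (mul x y) = sc (tr y) (sc (tr x) e) - sc (tr y) x - sc (tr x) y + mul y x"
    using exp[of "tr y" y "tr x" x] by (simp add: cjmul cjx[symmetric])
  have e2: "cj (mul y x) = sc (tr x) (sc (tr y) e) - sc (tr x) y - sc (tr y) x + mul x y"
    using exp[of "tr x" x "tr y" y] by (simp add: cjmul cjx[symmetric])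
  have e3: "sc (tr y) (sc (tr x) e) = sc (tr x) (sc (tr y) e)"
    by (rule vs.scale_left_commute)
  show ?thesis unfolding e1 e2 e3 by (simp add: algebra_simps del: vs.scale_scale)
qed

lemma L1:
  assumes rev: "reversible mul" and ab: "mul a b = e" and c: "nm a \<noteq> 0"
  shows "mul b a = e"
proof -
  let ?c = "nm a"
  have "mul a (sc ?c b - cj a) = 0"
    by (simp add: diffR scR ab nm)
  hence "mul (sc ?c b - cj a) a = 0" using rev unfolding reversible_def by blast
  hence "sc ?c (mul b a) = sc ?c e" by (simp add: diffL scL nm2)
  thus ?thesis using c by simp
qed

lemma L2:
  assumes rev: "reversible mul" and ab: "mul a b = e" and bb: "mul b (cj b) = sc c e"
    and c: "c \<noteq> 0"
  shows "mul b a = e"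
proof -
  have bb2: "mul (cj b) b = sc c e" using nm2[of b] nm[of b] bb by metis
  have "mul (sc c a - cj b) b = 0"
    by (simp add: diffL scL ab bb2)
  hence "mul b (sc c a - cj b) = 0" using rev unfolding reversible_def by blast
  hence "sc c (mul b a) = sc c e" by (simp add: diffR scR bb)
  thus ?thesis using c by simp
qed

lemma part1:
  assumes char: "(2::'f) \<noteq> 0" and rev: "reversible mul"
  shows "vN_finite mul e"
  unfolding vN_finite_def
proof (intro allI impI)
  fix a b assume ab: "mul a b = e"
  show "mul b a = e"
  proof (cases "nm a = 0")
    case False thus ?thesis using L1[OF rev ab] by blast
  next
    case True
    hence aa: "mul a (cj a) = 0" and aa2: "mul (cj a) a = 0" using nm[of a] nm2[of a] by simp_all
    define g where "g = (1 - nm b) / 2"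
    define b' where "b' = b + sc g (cj a)"
    have ab': "mul a b' = e" unfolding b'_def by (simp add: addR scR ab aa)
    have ba': "mul b' a = mul b a" unfolding b'_def by (simp add: addL scL aa2)
    have tsum: "mul b a + cj (mul b a) = e + e"
      using trsym[of a b] ab cje by simp
    have cjb': "cj b' = cj b + sc g a" unfolding b'_def by (simp only: cjadd cjsc cjcj)
    have "mul b' (cj b') = mul b (cj b) + sc g (mul b a) + (sc g (mul (cj a) (cj b))
          + sc g (sc g (mul (cj a) a)))"
      unfolding cjb' unfolding b'_def by (simp only: addL addR scL scR vs.scale_right_distrib) (simp only: ac_simps)
    also have "\<dots> = sc (nm b) e + sc g (mul b a + cj (mul b a))"
      by (simp only: aa2 nm cjmul vs.scale_zero_right add_0_right vs.scale_right_distrib add.assoc)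
    also have "\<dots> = sc (nm b) e + sc g (e + e)" by (simp only: tsum)
    also have "\<dots> = sc (nm b + 2 * g) e"
      by (simp only: vs.scale_left_distrib vs.scale_right_distrib vs.scale_scale mult_2 distrib_right)
    also have "nm b + 2 * g = 1" unfolding g_def using char by (simp add: field_simps)
    finally have "mul b' (cj b') = sc 1 e" .
    from L2[OF rev ab' this] ba' show ?thesis by simp
  qed
qed

lemma part2:
  assumes vn: "vN_finite mul e" and an: "norm_anisotropic sc mul e cj"
  shows "reversible mul"
  unfolding reversible_def
proof (intro allI impI)
  fix a b assume ab: "mul a b = 0"
  show "mul b a = 0"
  proof (cases "e = 0")
    case True
    have "mul b a = mul (mul e b) a" by (simp add: eL)
    thus ?thesis using True by simp
  next
    case ne: False
    show ?thesis
    proof (cases "a = 0")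
      case True thus ?thesis by simp
    next
      case False
      have "alg_norm sc mul e cj a = nm a"
        unfolding alg_norm_def
        by (rule the_equality) (use nm[of a] ne in auto)
      hence c: "nm a \<noteq> 0" using an False unfolding norm_anisotropic_def by metis
      let ?c = "nm a"
      have "mul a (sc (inverse ?c) (b + cj a)) = e"
        using c by (simp add: scR addR ab nm)
      hence "mul (sc (inverse ?c) (b + cj a)) a = e" using vn unfolding vN_finite_def by blast
      hence "sc (inverse ?c) (mul b a + sc ?c e) = e" by (simp add: scL addL nm2)
      hence "sc ?c (sc (inverse ?c) (mul b a + sc ?c e)) = sc ?c e" by simp
      hence "mul b a + sc ?c e = sc ?c e" using c by simp
      thus ?thesis by simp
    qed
  qed
qed

end

theorem corollary4p10:
  fixes sc :: "'f::field \<Rightarrow> 'a::ab_group_add \<Rightarrow> 'a"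
    and mul :: "'a \<Rightarrow> 'a \<Rightarrow> 'a" and e :: 'a and cj :: "'a \<Rightarrow> 'a"
  assumes char: "(2::'f) \<noteq> 0"
    and alg: "involutive_algebra sc mul e cj"
  shows "(reversible mul \<longrightarrow> vN_finite mul e) \<and>
         (vN_finite mul e \<and> norm_anisotropic sc mul e cj \<longrightarrow> reversible mul)"
proof -
  interpret invalg sc mul e cj using alg by unfold_locales
  show ?thesis using part1[OF char] part2 by blast
qed

end
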